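(* Let $A$ be a real $m\times n$ matrix, $\mathbf b\in\mathbb R^m$, $\mathbf c\in\mathbb R^n$ (row vector), such that the linear program $\max\mathbf c\mathbf x$ s.t. $A\mathbf x\le\mathbf b$, $\mathbf x\ge0$ has unique optimal primal and dual solutions $\mathbf x^*$, $\mathbf y^*$. Let $\lambda=\min(\alpha_P,\alpha_D,\beta_P,\beta_D)$. Then for every primal feasible $\mathbf x$, \[ \|\mathbf x^*-\mathbf x\|_\infty\le\mathbf c(\mathbf x^*-\mathbf x)\left(\frac{1+\|A\|}{\lambda\min(\gamma,1)}\right). \]
   Context: The dual is $\min\mathbf y\mathbf b$ s.t. $\mathbf yA\ge\mathbf c$, $\mathbf y\ge0$. $U=\{i:x^*_i>0\}$, $V=\{j:y^*_j>0\}$, $\bar U,\bar V$ complements. $\alpha_P=\min_{i\in U}x^*_i$, $\alpha_D=\min_{j\in V}y^*_j$, $\beta_P=\min_{j\in\bar V}(b_j-A_{j,:}\mathbf x^* )$, $\beta_D=\min_{i\in\bar U}(\mathbf y^*A_{:,i}-c_i)$, $\gamma=\min_{k\in U}\mathrm{dist}(A_{V,k},\mathrm{span}(A_{V,U\setminus\{k\}}))$, where $A_{V,k}$ is column $k$ restricted to rows $V$ and $\mathrm{span}(A_{V,U\setminus\{k\}})$ is the span of the columns indexed by $U\setminus\{k\}$ restricted to rows $V$. $\|A\|$ is the spectral norm and $\|\cdot\|_\infty$ the max-norm. *)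

theory Defs
  imports "HOL-Analysis.Analysis"
begin

definition primal_feasible :: "real^'n^'m \<Rightarrow> real^'m \<Rightarrow> real^'n \<Rightarrow> bool" where
  "primal_feasible A b x \<longleftrightarrow> (\<forall>j. (A *v x) $ j \<le> b $ j) \<and> (\<forall>i. 0 \<le> x $ i)"

definition primal_optimal :: "real^'n^'m \<Rightarrow> real^'m \<Rightarrow> real^'n \<Rightarrow> real^'n \<Rightarrow> bool" where
  "primal_optimal A b c x \<longleftrightarrow> primal_feasible A b x \<and>
     (\<forall>x'. primal_feasible A b x' \<longrightarrow> c \<bullet> x' \<le> c \<bullet> x)"

definition dual_feasible :: "real^'n^'m \<Rightarrow> real^'n \<Rightarrow> real^'m \<Rightarrow> bool" where
  "dual_feasible A c y \<longleftrightarrow> (\<forall>i. c $ i \<le> (y v* A) $ i) \<and> (\<forall>j. 0 \<le> y $ j)"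

definition dual_optimal :: "real^'n^'m \<Rightarrow> real^'m \<Rightarrow> real^'n \<Rightarrow> real^'m \<Rightarrow> bool" where
  "dual_optimal A b c y \<longleftrightarrow> dual_feasible A c y \<and>
     (\<forall>y'. dual_feasible A c y' \<longrightarrow> y \<bullet> b \<le> y' \<bullet> b)"

definition suppP :: "real^'n \<Rightarrow> 'n set" where "suppP x = {i. 0 < x $ i}"
definition suppD :: "real^'m \<Rightarrow> 'm set" where "suppD y = {j. 0 < y $ j}"

text \<open>lambda = min(alpha_P, alpha_D, beta_P, beta_D), each minimum over an empty index set
  being +infinity (i.e. omitted). The union below is always nonempty.\<close>
definition lp_lambda :: "real^'n^'m \<Rightarrow> real^'m \<Rightarrow> real^'n \<Rightarrow> real^'n \<Rightarrow> real^'m \<Rightarrow> real" where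
  "lp_lambda A b c xs ys = Min (
      {xs $ i | i. i \<in> suppP xs}
    \<union> {ys $ j | j. j \<in> suppD ys}
    \<union> {b $ j - (A *v xs) $ j | j. j \<notin> suppD ys}
    \<union> {(ys v* A) $ i - c $ i | i. i \<notin> suppP xs})"

text \<open>Column k of A restricted to the rows V (embedded in R^m with zero entries outside V).\<close>
definition restr_col :: "real^'n^'m \<Rightarrow> 'm set \<Rightarrow> 'n \<Rightarrow> real^'m" where
  "restr_col A V k = (\<chi> j. if j \<in> V then A $ j $ k else 0)"

text \<open>gamma = min over k in U of dist(A_{V,k}, span(A_{V,U-{k}})); +infinity if U is empty.
  We define min(gamma,1) directly.\<close>
definition lp_gamma_min1 :: "real^'n^'m \<Rightarrow> real^'n \<Rightarrow> real^'m \<Rightarrow> real" where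
  "lp_gamma_min1 A xs ys =
     (let U = suppP xs; V = suppD ys in
      if U = {} then 1
      else min (Min {infdist (restr_col A V k) (span (restr_col A V ` (U - {k}))) | k. k \<in> U}) 1)"

end

theory Submission
  imports Defs
begin

lemma cone_sum_in_hull:
  fixes f :: "'i \<Rightarrow> 'a::euclidean_space"
  assumes "finite I" "\<forall>i\<in>I. 0 \<le> u i"
  shows "(\<Sum>i\<in>I. u i *\<^sub>R f i) \<in> convex_cone hull (f ` I)"
  using assms
proof (induction I rule: finite_induct)
  case empty then show ?case by (simp add: convex_cone_hull_contains_0)
next
  case (insert x F)
  have "u x *\<^sub>R f x \<in> convex_cone hull (f ` insert x F)"
    using insert by (intro convex_cone_hull_mul hull_inc) auto
  moreover have "(\<Sum>i\<in>F. u i *\<^sub>R f i) \<in> convex_cone hull (f ` insert x F)"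
    using insert hull_mono[of "f ` F" "f ` insert x F"] by auto
  ultimately show ?case using insert by (simp add: convex_cone_hull_add)
qed

lemma farkas:
  fixes f :: "'i \<Rightarrow> 'a::euclidean_space"
  assumes fin: "finite I"
    and H: "\<And>v. (\<forall>i\<in>I. f i \<bullet> v \<le> 0) \<Longrightarrow> g \<bullet> v \<le> 0"
  shows "\<exists>u. (\<forall>i\<in>I. 0 \<le> u i) \<and> g = (\<Sum>i\<in>I. u i *\<^sub>R f i)"
proof (rule ccontr)
  assume nE: "\<not> ?thesis"
  define K where "K = {(\<Sum>i\<in>I. u i *\<^sub>R f i) | u. \<forall>i\<in>I. 0 \<le> u i}"
  have K1: "K \<subseteq> convex_cone hull (f ` I)"
    unfolding K_def using cone_sum_in_hull[OF fin] by blast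
  have cc: "convex_cone K"
    unfolding convex_cone_def
  proof (intro conjI)
    have "(\<Sum>i\<in>I. (\<lambda>i. 0::real) i *\<^sub>R f i) \<in> K" unfolding K_def by (intro CollectI exI[of _ "\<lambda>i. 0::real"]) auto
    then show "K \<noteq> {}" by blast
    show "convex K" unfolding convex_def K_def
    proof clarify
      fix t s :: real and u1 u2 :: "'i \<Rightarrow> real"
      assume h: "0 \<le> t" "0 \<le> s" "t + s = 1" "\<forall>i\<in>I. 0 \<le> u1 i" "\<forall>i\<in>I. 0 \<le> u2 i"
      show "\<exists>u. t *\<^sub>R (\<Sum>i\<in>I. u1 i *\<^sub>R f i) + s *\<^sub>R (\<Sum>i\<in>I. u2 i *\<^sub>R f i) = (\<Sum>i\<in>I. u i *\<^sub>R f i) \<and> (\<forall>i\<in>I. 0 \<le> u i)"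
        using h by (intro exI[of _ "\<lambda>i. t * u1 i + s * u2 i"])
          (auto simp: scaleR_sum_right sum.distrib[symmetric] scaleR_add_left)
    qed
    show "conic K" unfolding conic_def K_def
    proof clarify
      fix c :: real and u :: "'i \<Rightarrow> real"
      assume h: "0 \<le> c" "\<forall>i\<in>I. 0 \<le> u i"
      show "\<exists>u'. c *\<^sub>R (\<Sum>i\<in>I. u i *\<^sub>R f i) = (\<Sum>i\<in>I. u' i *\<^sub>R f i) \<and> (\<forall>i\<in>I. 0 \<le> u' i)"
        using h by (intro exI[of _ "\<lambda>i. c * u i"]) (auto simp: scaleR_sum_right)
    qed
  qed
  have fK: "f ` I \<subseteq> K"
  proof
    fix x assume "x \<in> f ` I"
    then obtain j where j: "j \<in> I" "x = f j" by auto
    have "(\<Sum>i\<in>I. (if i = j then 1 else 0) *\<^sub>R f i) = f j"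
    proof -
      have "(\<Sum>i\<in>I. (if i = j then 1 else 0) *\<^sub>R f i) = (\<Sum>i\<in>I. if i = j then f i else 0)"
        by (rule sum.cong) auto
      also have "\<dots> = f j" using j fin by simp
      finally show ?thesis .
    qed
    then show "x \<in> K" unfolding K_def using j
      by (intro CollectI exI[of _ "\<lambda>i. if i = j then 1 else 0"]) auto
  qed
  have "convex_cone hull (f ` I) \<subseteq> K"
    using fK cc by (rule hull_minimal)
  with K1 have KH: "K = convex_cone hull (f ` I)" by blast
  have clK: "closed K" unfolding KH using fin by (simp add: closed_convex_cone_hull)
  have gK: "g \<notin> K" using nE unfolding K_def by blast
  obtain a b where ab: "inner a g < b" "\<forall>x\<in>K. inner a x > b"
    using separating_hyperplane_closed_point[OF _ clK gK] cc unfolding convex_cone_def by blast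
  have "0 \<in> K" using KH convex_cone_hull_contains_0 by simp
  with ab have b0: "b < 0" by fastforce
  have "f i \<bullet> (- a) \<le> 0" if i: "i \<in> I" for i
  proof (rule ccontr)
    assume "\<not> f i \<bullet> (- a) \<le> 0"
    then have p: "inner a (f i) < 0" by (simp add: inner_commute)
    define t where "t = b / inner a (f i)"
    have t0: "0 \<le> t" unfolding t_def using p b0 by (simp add: divide_nonpos_neg)
    have "t *\<^sub>R f i \<in> K" using cc fK i t0 unfolding convex_cone_def conic_def by blast
    then have "b < inner a (t *\<^sub>R f i)" using ab by blast
    also have "\<dots> = b" unfolding t_def using p by simp
    finally show False by simp
  qed
  then have "g \<bullet> (- a) \<le> 0" by (intro H) auto
  then show False using ab b0 by (simp add: inner_commute)
qed

lemma sum_option_UNIV: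
  fixes G :: "'a::finite option \<Rightarrow> 'b::comm_monoid_add"
  shows "(\<Sum>a\<in>UNIV. G a) = G None + (\<Sum>j\<in>UNIV. G (Some j))"
  by (simp add: UNIV_option_conv sum.reindex)

lemma sum_idx:
  fixes F :: "('m::finite option + 'n::finite option) \<Rightarrow> 'b::comm_monoid_add"
  shows "(\<Sum>k\<in>UNIV. F k) = (\<Sum>j\<in>UNIV. F (Inl (Some j))) + F (Inl None) + ((\<Sum>i\<in>UNIV. F (Inr (Some i))) + F (Inr None))"
proof -
  have "(\<Sum>k\<in>UNIV. F k) = (\<Sum>k\<in>(UNIV::'m option set) <+> (UNIV::'n option set). F k)" by simp
  also have "\<dots> = (\<Sum>a\<in>UNIV. F (Inl a)) + (\<Sum>a\<in>UNIV. F (Inr a))"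
    by (subst sum.Plus) (auto simp: o_def)
  finally show ?thesis by (simp add: sum_option_UNIV add_ac)
qed

lemma mv_comp: "(A *v x) $ j = A $ j \<bullet> (x :: real^'n)"
  by (simp add: matrix_vector_mult_def inner_vec_def mult.commute)

lemma vm_add: "((x + y) v* A) $ i = (x v* A) $ i + (y v* (A::real^'n^'m)) $ i"
  by (simp add: vector_matrix_mult_def sum.distrib algebra_simps)

lemma vm_scale: "((k *\<^sub>R x) v* A) $ i = k * (x v* (A::real^'n^'m)) $ i"
  by (simp add: vector_matrix_mult_def sum_distrib_left algebra_simps)

lemma sum_delta1: "(\<Sum>a\<in>UNIV. (if a = j then 1 else 0) * X a) = (X (j::'a::finite) :: real)"
proof -
  have "(\<Sum>a\<in>UNIV. (if a = j then 1 else 0) * X a) = (\<Sum>a\<in>UNIV. if a = j then X a else 0)"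
    by (rule sum.cong) auto
  then show ?thesis by simp
qed

lemma sum_delta2: "(\<Sum>a\<in>UNIV. X a * (if j = a then 1 else 0)) = (X (j::'a::finite) :: real)"
proof -
  have "(\<Sum>a\<in>UNIV. X a * (if j = a then 1 else 0)) = (\<Sum>a\<in>UNIV. if a = j then X a else 0)"
    by (rule sum.cong) auto
  then show ?thesis by simp
qed

lemma sum_delta3: "(\<Sum>a\<in>UNIV. (if j = a then 1 else 0) * X a) = (X (j::'a::finite) :: real)"
proof -
  have "(\<Sum>a\<in>UNIV. (if j = a then 1 else 0) * X a) = (\<Sum>a\<in>UNIV. if a = j then X a else 0)"
    by (rule sum.cong) auto
  then show ?thesis by simp
qed

lemma axis_comp: "axis i (1::real) $ k = (if k = i then 1 else 0)"
  by (simp add: axis_def)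

lemma axis_inner: "axis i 1 \<bullet> d = (d::real^'n) $ i"
  by (simp add: inner_vec_def axis_comp sum_delta1)

lemma vm_axis: "(axis j 1 v* (A::real^'n^'m)) $ i = A $ j $ i"
  by (simp add: vector_matrix_mult_def axis_comp mult.commute[of _ "if _ then _ else _"] sum_delta1)

lemma mv_add: "(A *v (x + y)) $ i = (A *v x) $ i + ((A::real^'n^'m) *v y) $ i"
  by (simp add: matrix_vector_mult_def sum.distrib algebra_simps)

lemma mv_scale: "(A *v (k *\<^sub>R x)) $ i = k * ((A::real^'n^'m) *v x) $ i"
  by (simp add: matrix_vector_mult_def sum_distrib_left algebra_simps)

lemma weak_duality:
  assumes "primal_feasible A b x" "dual_feasible A c y"
  shows "c \<bullet> x \<le> y \<bullet> b"
proof -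
  have "c \<bullet> x = (\<Sum>i\<in>UNIV. c $ i * x $ i)" by (simp add: inner_vec_def)
  also have "\<dots> \<le> (\<Sum>i\<in>UNIV. (y v* A) $ i * x $ i)"
    using assms unfolding primal_feasible_def dual_feasible_def
    by (intro sum_mono mult_right_mono) auto
  also have "\<dots> = (y v* A) \<bullet> x" by (simp add: inner_vec_def)
  also have "\<dots> = y \<bullet> (A *v x)" by (rule dot_lmul_matrix)
  also have "\<dots> = (\<Sum>j\<in>UNIV. y $ j * (A *v x) $ j)" by (simp add: inner_vec_def)
  also have "\<dots> \<le> (\<Sum>j\<in>UNIV. y $ j * b $ j)"
    using assms unfolding primal_feasible_def dual_feasible_def
    by (intro sum_mono mult_left_mono) auto
  also have "\<dots> = y \<bullet> b" by (simp add: inner_vec_def)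
  finally show ?thesis .
qed

locale lpctx =
  fixes A :: "real^'n::finite^'m::finite" and b :: "real^'m" and c :: "real^'n"
    and xs :: "real^'n" and ys :: "real^'m"
  assumes po: "primal_optimal A b c xs"
    and pu: "\<forall>x. primal_optimal A b c x \<longrightarrow> x = xs"
    and dop: "dual_optimal A b c ys"
    and du: "\<forall>y. dual_optimal A b c y \<longrightarrow> y = ys"
begin

lemma xs_feas: "primal_feasible A b xs" using po unfolding primal_optimal_def by blast
lemma ys_feas: "dual_feasible A c ys" using dop unfolding dual_optimal_def by blast

lemma primal_cone:
  assumes d1: "\<forall>j. (A *v d) $ j \<le> b $ j * t" and d2: "\<forall>i. 0 \<le> d $ i" and t0: "0 \<le> t"
    and d3: "c \<bullet> xs * t \<le> c \<bullet> d"
  shows "d = t *\<^sub>R xs"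
proof (cases "t = 0")
  case True
  have feas: "primal_feasible A b (xs + d)"
    unfolding primal_feasible_def
  proof (intro conjI allI)
    fix j show "(A *v (xs + d)) $ j \<le> b $ j"
      using xs_feas d1 True unfolding primal_feasible_def by (simp add: mv_add) (metis add_mono add.right_neutral)
  next
    fix i show "0 \<le> (xs + d) $ i" using xs_feas d2 unfolding primal_feasible_def by simp
  qed
  have "primal_optimal A b c (xs + d)"
    unfolding primal_optimal_def
  proof (intro conjI allI impI feas)
    fix x' assume "primal_feasible A b x'"
    then have "c \<bullet> x' \<le> c \<bullet> xs" using po unfolding primal_optimal_def by blast
    also have "\<dots> \<le> c \<bullet> (xs + d)" using d3 True by (simp add: inner_add_right)
    finally show "c \<bullet> x' \<le> c \<bullet> (xs + d)" .
  qed
  then have "xs + d = xs" using pu by blast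
  then show ?thesis using True by simp
next
  case False
  then have tp: "0 < t" using t0 by simp
  define x where "x = inverse t *\<^sub>R d"
  have feas: "primal_feasible A b x"
    unfolding primal_feasible_def x_def
  proof (intro conjI allI)
    fix j
    have "inverse t * (A *v d) $ j \<le> inverse t * (b $ j * t)"
      using d1 tp by (intro mult_left_mono) auto
    moreover have "inverse t * (b $ j * t) = b $ j" using tp by simp
    ultimately show "(A *v (inverse t *\<^sub>R d)) $ j \<le> b $ j" by (simp only: mv_scale)
  next
    fix i show "0 \<le> (inverse t *\<^sub>R d) $ i" using d2 tp by simp
  qed
  have cx: "c \<bullet> xs \<le> c \<bullet> x"
  proof -
    have "inverse t * (c \<bullet> xs * t) \<le> inverse t * (c \<bullet> d)" using d3 tp by (intro mult_left_mono) auto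
    moreover have "inverse t * (c \<bullet> xs * t) = c \<bullet> xs" using tp by simp
    ultimately show ?thesis unfolding x_def by simp
  qed
  have "primal_optimal A b c x"
    unfolding primal_optimal_def
  proof (intro conjI allI impI feas)
    fix x' assume "primal_feasible A b x'"
    then have "c \<bullet> x' \<le> c \<bullet> xs" using po unfolding primal_optimal_def by blast
    then show "c \<bullet> x' \<le> c \<bullet> x" using cx by simp
  qed
  then have "x = xs" using pu by blast
  then show ?thesis using tp unfolding x_def by auto
qed

lemma dual_cert:
  assumes pq: "p \<bullet> xs + q \<le> 0"
  shows "\<exists>y s. (\<forall>j. 0 \<le> y $ j) \<and> 0 \<le> s \<and> (\<forall>i. p $ i \<le> (y v* A) $ i - s * c $ i)
     \<and> q \<le> s * (c \<bullet> xs) - y \<bullet> b"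
proof -
  define f :: "('m option + 'n option) \<Rightarrow> (real^'n) \<times> real" where
    "f k = (case k of Inl (Some j) \<Rightarrow> (A $ j, - b $ j) | Inl None \<Rightarrow> (-c, c \<bullet> xs)
       | Inr (Some i) \<Rightarrow> (- axis i 1, 0) | Inr None \<Rightarrow> (0, -1))" for k
  have "\<exists>u. (\<forall>k\<in>UNIV. 0 \<le> u k) \<and> (p, q) = (\<Sum>k\<in>UNIV. u k *\<^sub>R f k)"
  proof (rule farkas)
    fix v :: "(real^'n) \<times> real"
    assume H: "\<forall>k\<in>UNIV. f k \<bullet> v \<le> 0"
    obtain d t where v: "v = (d, t)" by (cases v)
    have h1: "(A *v d) $ j \<le> b $ j * t" for j
      using H[rule_format, of "Inl (Some j)"] by (simp add: f_def v mv_comp)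
    have h2: "0 \<le> d $ i" for i
      using H[rule_format, of "Inr (Some i)"] by (simp add: f_def v axis_inner)
    have h3: "0 \<le> t" using H[rule_format, of "Inr None"] by (simp add: f_def v)
    have h4: "c \<bullet> xs * t \<le> c \<bullet> d" using H[rule_format, of "Inl None"] by (simp add: f_def v mult.commute)
    have "d = t *\<^sub>R xs" using primal_cone h1 h2 h3 h4 by blast
    then have "(p, q) \<bullet> v = t * (p \<bullet> xs + q)" by (simp add: v algebra_simps)
    also have "\<dots> \<le> 0" using h3 pq by (simp add: mult_nonneg_nonpos)
    finally show "(p, q) \<bullet> v \<le> 0" .
  qed simp
  then obtain u where u0: "\<forall>k. 0 \<le> u k" and pqs: "(p, q) = (\<Sum>k\<in>UNIV. u k *\<^sub>R f k)" by auto
  define y :: "real^'m" where "y = (\<chi> j. u (Inl (Some j)))"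
  define s where "s = u (Inl None)"
  have P: "p = (\<Sum>k\<in>UNIV. u k *\<^sub>R fst (f k))" using arg_cong[OF pqs, of fst] by (simp add: fst_sum)
  have Q: "q = (\<Sum>k\<in>UNIV. u k * snd (f k))" using arg_cong[OF pqs, of snd] by (simp add: snd_sum)
  have "p $ i \<le> (y v* A) $ i - s * c $ i" for i
  proof -
    have "p $ i = (\<Sum>k\<in>UNIV. u k * fst (f k) $ i)" using P by simp
    also have "\<dots> = (\<Sum>j\<in>UNIV. u (Inl (Some j)) * A $ j $ i) - s * c $ i
        - (\<Sum>i'\<in>UNIV. u (Inr (Some i')) * axis i' 1 $ i)"
      by (subst sum_idx) (simp add: f_def s_def sum_negf)
    also have "(\<Sum>i'\<in>UNIV. u (Inr (Some i')) * axis i' (1::real) $ i) = u (Inr (Some i))"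
      by (simp add: axis_comp mult.commute[of _ "if _ then _ else _"] sum_delta1 sum_delta3)
    also have "(\<Sum>j\<in>UNIV. u (Inl (Some j)) * A $ j $ i) = (y v* A) $ i"
      by (simp add: y_def vector_matrix_mult_def mult.commute)
    finally show ?thesis using u0 by simp
  qed
  moreover have "q \<le> s * (c \<bullet> xs) - y \<bullet> b"
  proof -
    have "q = - (\<Sum>j\<in>UNIV. u (Inl (Some j)) * b $ j) + s * (c \<bullet> xs) - u (Inr None)"
      using Q by (subst (asm) sum_idx) (simp add: f_def s_def sum_negf)
    moreover have "(\<Sum>j\<in>UNIV. u (Inl (Some j)) * b $ j) = y \<bullet> b" by (simp add: y_def inner_vec_def)
    ultimately show ?thesis using u0 by simp
  qed
  moreover have "\<forall>j. 0 \<le> y $ j" "0 \<le> s" using u0 by (auto simp: y_def s_def)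
  ultimately show ?thesis by blast
qed

end

context lpctx begin

lemma ys_le_feasible: "dual_feasible A c y \<Longrightarrow> ys \<bullet> b \<le> y \<bullet> b"
  using dop unfolding dual_optimal_def by blast

lemma opt_if_le: assumes "dual_feasible A c y" "y \<bullet> b \<le> ys \<bullet> b" shows "y = ys"
proof -
  have "dual_optimal A b c y" unfolding dual_optimal_def
    using assms ys_le_feasible by (auto intro: order_trans)
  then show ?thesis using du by blast
qed

lemma strong_duality: "c \<bullet> xs = ys \<bullet> b"
proof -
  obtain y s where y0: "\<forall>j. 0 \<le> y $ j" and s0: "0 \<le> s"
    and h1: "\<forall>i. c $ i \<le> (y v* A) $ i - s * c $ i" and h2: "- (c \<bullet> xs) \<le> s * (c \<bullet> xs) - y \<bullet> b"
    using dual_cert[of c "- (c \<bullet> xs)"] by auto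
  define y' where "y' = inverse (1 + s) *\<^sub>R y"
  have sp: "0 < 1 + s" using s0 by simp
  have feas: "dual_feasible A c y'"
    unfolding dual_feasible_def
  proof (intro conjI allI)
    fix i
    have "inverse (1 + s) * ((1 + s) * c $ i) \<le> inverse (1 + s) * (y v* A) $ i"
      using h1 sp by (intro mult_left_mono) (auto simp: algebra_simps)
    moreover have "inverse (1 + s) * ((1 + s) * c $ i) = c $ i" using sp by (simp add: field_simps)
    moreover have "(y' v* A) $ i = inverse (1 + s) * (y v* A) $ i" by (simp add: y'_def vm_scale)
    ultimately show "c $ i \<le> (y' v* A) $ i" by linarith
  next
    fix j show "0 \<le> y' $ j" using y0 sp by (simp add: y'_def)
  qed
  have "y' \<bullet> b = inverse (1 + s) * (y \<bullet> b)" by (simp add: y'_def)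
  also have "\<dots> \<le> inverse (1 + s) * ((1 + s) * (c \<bullet> xs))"
    using h2 sp by (intro mult_left_mono) (auto simp: algebra_simps)
  also have "\<dots> = c \<bullet> xs" using sp by simp
  finally have "y' \<bullet> b \<le> c \<bullet> xs" .
  moreover have "ys \<bullet> b \<le> y' \<bullet> b" using ys_le_feasible[OF feas] .
  moreover have "c \<bullet> xs \<le> ys \<bullet> b" using weak_duality[OF xs_feas ys_feas] .
  ultimately show ?thesis by simp
qed

lemma strict_var: assumes "xs $ i = 0" shows "c $ i < (ys v* A) $ i"
proof -
  have "axis i 1 \<bullet> xs + 0 \<le> 0" using assms by (simp add: axis_inner)
  then obtain y s where y0: "\<forall>j. 0 \<le> y $ j" and s0: "0 \<le> s"
    and h1: "\<forall>i'. axis i 1 $ i' \<le> (y v* A) $ i' - s * c $ i'" and h2: "0 \<le> s * (c \<bullet> xs) - y \<bullet> b"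
    using dual_cert[of "axis i 1" 0] by blast
  define y' where "y' = inverse (1 + s) *\<^sub>R (ys + y)"
  have sp: "0 < 1 + s" using s0 by simp
  have key: "c $ i' + inverse (1 + s) * axis i 1 $ i' \<le> (y' v* A) $ i'" for i'
  proof -
    have "c $ i' \<le> (ys v* A) $ i'" using ys_feas unfolding dual_feasible_def by blast
    then have "(1 + s) * c $ i' + axis i 1 $ i' \<le> (ys v* A) $ i' + (y v* A) $ i'"
      using h1[rule_format, of i'] by (simp add: algebra_simps)
    then have "inverse (1 + s) * ((1 + s) * c $ i' + axis i 1 $ i') \<le> inverse (1 + s) * ((ys v* A) $ i' + (y v* A) $ i')"
      using sp by (intro mult_left_mono) auto
    moreover have "inverse (1 + s) * ((1 + s) * c $ i' + axis i 1 $ i') = c $ i' + inverse (1 + s) * axis i 1 $ i'"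
      using sp by (simp add: field_simps)
    moreover have "(y' v* A) $ i' = inverse (1 + s) * ((ys v* A) $ i' + (y v* A) $ i')" by (simp add: y'_def vm_scale vm_add)
    ultimately show ?thesis by linarith
  qed
  have feas: "dual_feasible A c y'"
    unfolding dual_feasible_def
  proof (intro conjI allI)
    fix i' have "0 \<le> inverse (1 + s) * axis i 1 $ i'" using sp by (simp add: axis_comp)
    then show "c $ i' \<le> (y' v* A) $ i'" using key[of i'] by linarith
  next
    fix j show "0 \<le> y' $ j" using y0 sp ys_feas unfolding dual_feasible_def by (simp add: y'_def)
  qed
  have "y' \<bullet> b = inverse (1 + s) * (ys \<bullet> b + y \<bullet> b)" by (simp add: y'_def inner_add_left)
  also have "\<dots> \<le> inverse (1 + s) * ((1 + s) * (ys \<bullet> b))"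
    using h2 sp strong_duality by (intro mult_left_mono) (auto simp: algebra_simps)
  also have "\<dots> = ys \<bullet> b" using sp by simp
  finally have "y' = ys" using opt_if_le[OF feas] by blast
  then have "c $ i + inverse (1 + s) \<le> (ys v* A) $ i" using key[of i] by (simp add: axis_comp)
  moreover have "0 < inverse (1 + s)" using sp by simp
  ultimately show ?thesis by linarith
qed

lemma strict_con: assumes "(A *v xs) $ j = b $ j" shows "0 < ys $ j"
proof -
  have "(- A $ j) \<bullet> xs + b $ j \<le> 0" using assms by (simp add: mv_comp)
  then obtain y s where y0: "\<forall>j. 0 \<le> y $ j" and s0: "0 \<le> s"
    and h1: "\<forall>i'. (- A $ j) $ i' \<le> (y v* A) $ i' - s * c $ i'" and h2: "b $ j \<le> s * (c \<bullet> xs) - y \<bullet> b"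
    using dual_cert[of "- A $ j" "b $ j"] by blast
  define y' where "y' = inverse (1 + s) *\<^sub>R (ys + y + axis j 1)"
  have sp: "0 < 1 + s" using s0 by simp
  have feas: "dual_feasible A c y'"
    unfolding dual_feasible_def
  proof (intro conjI allI)
    fix i'
    have "c $ i' \<le> (ys v* A) $ i'" using ys_feas unfolding dual_feasible_def by blast
    then have "(1 + s) * c $ i' \<le> (ys v* A) $ i' + (y v* A) $ i' + A $ j $ i'"
      using h1[rule_format, of i'] by (simp add: algebra_simps)
    then have "inverse (1 + s) * ((1 + s) * c $ i') \<le> inverse (1 + s) * ((ys v* A) $ i' + (y v* A) $ i' + A $ j $ i')"
      using sp by (intro mult_left_mono) auto
    moreover have "inverse (1 + s) * ((1 + s) * c $ i') = c $ i'" using sp by (simp add: field_simps)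
    moreover have "(y' v* A) $ i' = inverse (1 + s) * ((ys v* A) $ i' + (y v* A) $ i' + A $ j $ i')" by (simp add: y'_def vm_scale vm_add vm_axis)
    ultimately show "c $ i' \<le> (y' v* A) $ i'" by linarith
  next
    fix j' show "0 \<le> y' $ j'" using y0 sp ys_feas unfolding dual_feasible_def by (simp add: y'_def axis_comp)
  qed
  have "y' \<bullet> b = inverse (1 + s) * (ys \<bullet> b + y \<bullet> b + b $ j)"
    by (simp add: y'_def inner_add_left axis_inner)
  also have "\<dots> \<le> inverse (1 + s) * ((1 + s) * (ys \<bullet> b))"
    using h2 sp strong_duality by (intro mult_left_mono) (auto simp: algebra_simps)
  also have "\<dots> = ys \<bullet> b" using sp by simp
  finally have "y' = ys" using opt_if_le[OF feas] by blast
  then have "ys $ j = y' $ j" by simp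
  also have "y' $ j = inverse (1 + s) * (ys $ j + y $ j + 1)" unfolding y'_def by (simp add: axis_comp)
  finally have "ys $ j = inverse (1 + s) * (ys $ j + y $ j + 1)" .
  moreover have "0 < inverse (1 + s) * (ys $ j + y $ j + 1)"
    using sp y0 ys_feas unfolding dual_feasible_def by (intro mult_pos_pos) (auto intro: add_nonneg_pos)
  ultimately show ?thesis by simp
qed

lemma comp_slack:
  shows "\<forall>j. ys $ j * (b $ j - (A *v xs) $ j) = 0" and "\<forall>i. ((ys v* A) $ i - c $ i) * xs $ i = 0"
proof -
  have "ys \<bullet> b - c \<bullet> xs = (\<Sum>j\<in>UNIV. ys $ j * (b $ j - (A *v xs) $ j)) + (\<Sum>i\<in>UNIV. ((ys v* A) $ i - c $ i) * xs $ i)"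
  proof -
    have "ys \<bullet> (A *v xs) = (ys v* A) \<bullet> xs" by (simp add: dot_lmul_matrix)
    then show ?thesis by (simp add: inner_vec_def algebra_simps sum_subtractf)
  qed
  then have E: "(\<Sum>j\<in>UNIV. ys $ j * (b $ j - (A *v xs) $ j)) + (\<Sum>i\<in>UNIV. ((ys v* A) $ i - c $ i) * xs $ i) = 0"
    using strong_duality by simp
  have n1: "\<forall>j. 0 \<le> ys $ j * (b $ j - (A *v xs) $ j)"
    using xs_feas ys_feas unfolding primal_feasible_def dual_feasible_def by auto
  have n2: "\<forall>i. 0 \<le> ((ys v* A) $ i - c $ i) * xs $ i"
    using xs_feas ys_feas unfolding primal_feasible_def dual_feasible_def by auto
  have s1: "(\<Sum>j\<in>UNIV. ys $ j * (b $ j - (A *v xs) $ j)) = 0"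
    using E n1 n2 sum_nonneg[of UNIV "\<lambda>j. ys $ j * (b $ j - (A *v xs) $ j)"] sum_nonneg[of UNIV "\<lambda>i. ((ys v* A) $ i - c $ i) * xs $ i"] by auto
  have s2: "(\<Sum>i\<in>UNIV. ((ys v* A) $ i - c $ i) * xs $ i) = 0"
    using E s1 by simp
  show "\<forall>j. ys $ j * (b $ j - (A *v xs) $ j) = 0" using s1 n1 by (simp add: sum_nonneg_eq_0_iff)
  show "\<forall>i. ((ys v* A) $ i - c $ i) * xs $ i = 0" using s2 n2 by (simp add: sum_nonneg_eq_0_iff)
qed

end

lemma span_sum_repr:
  fixes f :: "'i \<Rightarrow> 'a::real_vector"
  assumes "finite S" "x \<in> span (f ` S)"
  shows "\<exists>a. x = (\<Sum>l\<in>S. a l *\<^sub>R f l)"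
proof -
  define W where "W = {(\<Sum>l\<in>S. a l *\<^sub>R f l) | a. True}"
  have "f ` S \<subseteq> W"
  proof
    fix v assume "v \<in> f ` S"
    then obtain m where m: "m \<in> S" "v = f m" by auto
    have "(\<Sum>l\<in>S. (if l = m then 1 else 0) *\<^sub>R f l) = (\<Sum>l\<in>S. if l = m then f l else 0)"
      by (rule sum.cong) auto
    also have "\<dots> = f m" using m assms(1) by simp
    finally show "v \<in> W" unfolding W_def using m
      by (intro CollectI exI[of _ "\<lambda>l. if l = m then 1 else 0"]) simp
  qed
  moreover have "subspace W"
    unfolding subspace_def W_def
  proof (intro conjI ballI allI)
    show "0 \<in> {(\<Sum>l\<in>S. a l *\<^sub>R f l) | a. True}"
      by (rule CollectI, rule exI[of _ "\<lambda>l. 0"]) simp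
  next
    fix x y assume "x \<in> {(\<Sum>l\<in>S. a l *\<^sub>R f l) | a. True}" "y \<in> {(\<Sum>l\<in>S. a l *\<^sub>R f l) | a. True}"
    then obtain a1 a2 where "x = (\<Sum>l\<in>S. a1 l *\<^sub>R f l)" "y = (\<Sum>l\<in>S. a2 l *\<^sub>R f l)" by auto
    then show "x + y \<in> {(\<Sum>l\<in>S. a l *\<^sub>R f l) | a. True}"
      by (intro CollectI exI[of _ "\<lambda>l. a1 l + a2 l"]) (simp add: sum.distrib scaleR_add_left)
  next
    fix r :: real and x assume "x \<in> {(\<Sum>l\<in>S. a l *\<^sub>R f l) | a. True}"
    then obtain a1 where "x = (\<Sum>l\<in>S. a1 l *\<^sub>R f l)" by auto
    then show "r *\<^sub>R x \<in> {(\<Sum>l\<in>S. a l *\<^sub>R f l) | a. True}"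
      by (intro CollectI exI[of _ "\<lambda>l. r * a1 l"]) (simp add: scaleR_sum_right)
  qed
  ultimately have "span (f ` S) \<subseteq> W" by (rule span_minimal)
  then show ?thesis using assms(2) unfolding W_def by blast
qed

context lpctx begin

abbreviation "U \<equiv> suppP xs"
abbreviation "V \<equiv> suppD ys"

lemma xs_nn: "0 \<le> xs $ i" using xs_feas unfolding primal_feasible_def by blast
lemma ys_nn: "0 \<le> ys $ j" using ys_feas unfolding dual_feasible_def by blast
lemma xs_le: "(A *v xs) $ j \<le> b $ j" using xs_feas unfolding primal_feasible_def by blast
lemma ys_ge: "c $ i \<le> (ys v* A) $ i" using ys_feas unfolding dual_feasible_def by blast

lemma inU: "i \<in> U \<Longrightarrow> (ys v* A) $ i = c $ i"
  using comp_slack(2) by (auto simp: suppP_def)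
lemma notU: "i \<notin> U \<Longrightarrow> xs $ i = 0 \<and> c $ i < (ys v* A) $ i"
  using xs_nn[of i] strict_var by (auto simp: suppP_def)
lemma inV: assumes "j \<in> V" shows "(A *v xs) $ j = b $ j"
proof -
  have "ys $ j * (b $ j - (A *v xs) $ j) = 0" using comp_slack(1) by blast
  moreover have "ys $ j \<noteq> 0" using assms by (simp add: suppD_def)
  ultimately show ?thesis by simp
qed
lemma notV: "j \<notin> V \<Longrightarrow> ys $ j = 0 \<and> (A *v xs) $ j < b $ j"
  using ys_nn[of j] strict_con[of j] xs_le[of j] by (auto simp: suppD_def less_le)

definition "lamset = {xs $ i | i. i \<in> suppP xs}
    \<union> {ys $ j | j. j \<in> suppD ys}
    \<union> {b $ j - (A *v xs) $ j | j. j \<notin> suppD ys}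
    \<union> {(ys v* A) $ i - c $ i | i. i \<notin> suppP xs}"

lemma lamset_fin: "finite lamset"
proof -
  have "lamset \<subseteq> range (\<lambda>i. xs $ i) \<union> range (\<lambda>j. ys $ j) \<union> range (\<lambda>j. b $ j - (A *v xs) $ j) \<union> range (\<lambda>i. (ys v* A) $ i - c $ i)"
    unfolding lamset_def by blast
  then show ?thesis by (rule finite_subset) simp
qed

lemma lamset_ne: "lamset \<noteq> {}"
proof -
  obtain i :: 'n where True by simp
  show ?thesis
  proof (cases "i \<in> U")
    case True then show ?thesis unfolding lamset_def by blast
  next
    case False then show ?thesis unfolding lamset_def by blast
  qed
qed

lemma lamset_pos: "\<forall>v\<in>lamset. 0 < v"
  unfolding lamset_def using notU notV by (auto simp: suppP_def suppD_def)

definition "lam = lp_lambda A b c xs ys"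

lemma lam_eq: "lam = Min lamset" unfolding lam_def lp_lambda_def lamset_def by simp

lemma lam_pos: "0 < lam"
  unfolding lam_eq using lamset_fin lamset_ne lamset_pos by (simp add: Min_gr_iff)

lemma lam_le: "v \<in> lamset \<Longrightarrow> lam \<le> v" unfolding lam_eq using lamset_fin by simp

lemma lam_U: "i \<in> U \<Longrightarrow> lam \<le> xs $ i" by (rule lam_le) (auto simp: lamset_def)
lemma lam_V: "j \<in> V \<Longrightarrow> lam \<le> ys $ j" by (rule lam_le) (auto simp: lamset_def)
lemma lam_nV: "j \<notin> V \<Longrightarrow> lam \<le> b $ j - (A *v xs) $ j" by (rule lam_le) (auto simp: lamset_def)
lemma lam_nU: "i \<notin> U \<Longrightarrow> lam \<le> (ys v* A) $ i - c $ i" by (rule lam_le) (auto simp: lamset_def)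

end

context lpctx begin

lemma opt_from_ge: assumes "primal_feasible A b x" "c \<bullet> xs \<le> c \<bullet> x" shows "x = xs"
proof -
  have "primal_optimal A b c x" unfolding primal_optimal_def
    using assms po unfolding primal_optimal_def by (auto intro: order_trans)
  then show ?thesis using pu by blast
qed

lemma rc_comp: "restr_col A V k $ j = (if j \<in> V then A $ j $ k else 0)"
  by (simp add: restr_col_def)

lemma not_in_span:
  assumes k: "k \<in> U"
  shows "restr_col A V k \<notin> span (restr_col A V ` (U - {k}))"
proof
  assume "restr_col A V k \<in> span (restr_col A V ` (U - {k}))"
  then obtain a where a: "restr_col A V k = (\<Sum>l\<in>U - {k}. a l *\<^sub>R restr_col A V l)"
    using span_sum_repr[of "U - {k}"] by auto
  define d :: "real^'n" where "d = (\<Sum>l\<in>U - {k}. a l *\<^sub>R axis l 1) - axis k 1"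
  have d_comp: "d $ l' = (\<Sum>l\<in>U - {k}. a l * (if l' = l then 1 else 0)) - (if l' = k then 1 else 0)" for l'
    by (simp add: d_def axis_comp)
  have d_out: "d $ l' = 0" if "l' \<notin> U" for l'
  proof -
    have "(\<Sum>l\<in>U - {k}. a l * (if l' = l then 1 else 0)) = 0"
      using that by (intro sum.neutral) auto
    moreover have "l' \<noteq> k" using that k by blast
    ultimately show ?thesis by (simp add: d_comp)
  qed
  have d_k: "d $ k = -1"
  proof -
    have "(\<Sum>l\<in>U - {k}. a l * (if k = l then 1 else 0)) = 0" by (intro sum.neutral) auto
    then show ?thesis by (simp add: d_comp)
  qed
  have Ad_comp: "(A *v d) $ j = (\<Sum>l\<in>U - {k}. a l * A $ j $ l) - A $ j $ k" for j
    by (simp add: d_def mv_comp inner_diff_right inner_sum_right mult.commute[of _ "A $ j $ _"] inner_commute[of _ "axis _ _"] axis_inner)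
  have Ad_V: "(A *v d) $ j = 0" if "j \<in> V" for j
  proof -
    have "restr_col A V k $ j = (\<Sum>l\<in>U - {k}. a l * restr_col A V l $ j)" using a by (simp add: sum_component)
    then have "A $ j $ k = (\<Sum>l\<in>U - {k}. a l * A $ j $ l)" using that by (simp add: rc_comp)
    then show ?thesis by (simp add: Ad_comp)
  qed
  define \<epsilon> where "\<epsilon> = lam / (1 + norm d + norm (A *v d))"
  have den: "0 < 1 + norm d + norm (A *v d)" by (simp add: add_pos_nonneg)
  have ep: "0 < \<epsilon>" unfolding \<epsilon>_def using lam_pos den by simp
  have epd: "\<epsilon> * \<bar>d $ l\<bar> \<le> lam" for l
  proof -
    have "\<epsilon> * \<bar>d $ l\<bar> \<le> \<epsilon> * (1 + norm d + norm (A *v d))"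
      using ep component_le_norm_cart[of d l] norm_ge_zero[of "A *v d"] by (intro mult_left_mono) (linarith, simp)
    also have "\<dots> = lam" unfolding \<epsilon>_def using den by simp
    finally show ?thesis .
  qed
  have epAd: "\<epsilon> * \<bar>(A *v d) $ j\<bar> \<le> lam" for j
  proof -
    have "\<epsilon> * \<bar>(A *v d) $ j\<bar> \<le> \<epsilon> * (1 + norm d + norm (A *v d))"
      using ep component_le_norm_cart[of "A *v d" j] norm_ge_zero[of d] by (intro mult_left_mono) (linarith, simp)
    also have "\<dots> = lam" unfolding \<epsilon>_def using den by simp
    finally show ?thesis .
  qed
  define x' where "x' = xs + \<epsilon> *\<^sub>R d"
  have feas: "primal_feasible A b x'"
    unfolding primal_feasible_def
  proof (intro conjI allI)
    fix j
    have e: "(A *v x') $ j = (A *v xs) $ j + \<epsilon> * (A *v d) $ j" by (simp add: x'_def mv_add mv_scale)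
    show "(A *v x') $ j \<le> b $ j"
    proof (cases "j \<in> V")
      case True then show ?thesis using e Ad_V inV by simp
    next
      case False
      have "\<epsilon> * (A *v d) $ j \<le> \<epsilon> * \<bar>(A *v d) $ j\<bar>" using ep by (intro mult_left_mono) auto
      then show ?thesis using e lam_nV[OF False] epAd[of j] by linarith
    qed
  next
    fix l
    show "0 \<le> x' $ l"
    proof (cases "l \<in> U")
      case True
      have "- (\<epsilon> * \<bar>d $ l\<bar>) \<le> \<epsilon> * d $ l"
        using ep abs_ge_minus_self[of "\<epsilon> * d $ l"] by (simp add: abs_mult)
      then show ?thesis using lam_U[OF True] epd[of l] by (simp add: x'_def)
    next
      case False then show ?thesis using d_out[OF False] xs_nn[of l] by (simp add: x'_def)
    qed
  qed
  have cd: "c \<bullet> d = 0"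
  proof -
    have "c \<bullet> d = (\<Sum>l\<in>UNIV. c $ l * d $ l)" by (simp add: inner_vec_def)
    also have "\<dots> = (\<Sum>l\<in>UNIV. (ys v* A) $ l * d $ l)"
    proof (rule sum.cong)
      fix l show "c $ l * d $ l = (ys v* A) $ l * d $ l"
      proof (cases "l \<in> U")
        case True then show ?thesis by (simp add: inU)
      next
        case False then show ?thesis by (simp add: d_out)
      qed
    qed simp
    also have "\<dots> = (ys v* A) \<bullet> d" by (simp add: inner_vec_def)
    also have "\<dots> = ys \<bullet> (A *v d)" by (rule dot_lmul_matrix)
    also have "\<dots> = (\<Sum>j\<in>UNIV. ys $ j * (A *v d) $ j)" by (simp add: inner_vec_def)
    also have "\<dots> = 0"
    proof (rule sum.neutral, rule ballI)
      fix j show "ys $ j * (A *v d) $ j = 0"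
      proof (cases "j \<in> V")
        case True then show ?thesis by (simp add: Ad_V)
      next
        case False then show ?thesis using notV by simp
      qed
    qed
    finally show ?thesis .
  qed
  have "c \<bullet> xs \<le> c \<bullet> x'" by (simp add: x'_def inner_add_right cd)
  then have "x' = xs" using opt_from_ge[OF feas] by blast
  then have "\<epsilon> *\<^sub>R d = 0" by (simp add: x'_def)
  then have "\<epsilon> * d $ k = 0" by (auto simp del: scaleR_eq_0_iff dest: arg_cong[where f="\<lambda>v. v $ k"])
  then show False using ep d_k by simp
qed

definition "gam = lp_gamma_min1 A xs ys"

definition "gset = {infdist (restr_col A V k) (span (restr_col A V ` (U - {k}))) | k. k \<in> U}"

lemma gset_fin: "finite gset"
proof -
  have "gset \<subseteq> range (\<lambda>k. infdist (restr_col A V k) (span (restr_col A V ` (U - {k}))))"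
    unfolding gset_def by blast
  then show ?thesis by (rule finite_subset) simp
qed

lemma gset_pos: "\<forall>v\<in>gset. 0 < v"
  unfolding gset_def
  using not_in_span by (auto intro!: infdist_pos_not_in_closed closed_subspace) (metis span_zero empty_iff)

lemma gam_pos: "0 < gam"
proof (cases "U = {}")
  case True then show ?thesis by (simp add: gam_def lp_gamma_min1_def)
next
  case False
  then have "gset \<noteq> {}" unfolding gset_def by blast
  then have "0 < Min gset" using gset_fin gset_pos by (simp add: Min_gr_iff)
  then show ?thesis using False by (simp add: gam_def lp_gamma_min1_def gset_def[symmetric] Let_def)
qed

lemma gam_le1: "gam \<le> 1"
  by (simp add: gam_def lp_gamma_min1_def Let_def)

lemma gam_le: "k \<in> U \<Longrightarrow> gam \<le> infdist (restr_col A V k) (span (restr_col A V ` (U - {k})))"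
proof -
  assume k: "k \<in> U"
  then have "infdist (restr_col A V k) (span (restr_col A V ` (U - {k}))) \<in> gset" unfolding gset_def by blast
  then have "Min gset \<le> infdist (restr_col A V k) (span (restr_col A V ` (U - {k})))" using gset_fin by simp
  then show ?thesis using k by (auto simp: gam_def lp_gamma_min1_def gset_def[symmetric] Let_def)
qed

end

lemma vec_eqI': "(\<And>i. x $ i = y $ i) \<Longrightarrow> x = y"
  by (simp add: vec_eq_iff)

lemma mv_diff: "(A *v (x - y)) $ i = (A *v x) $ i - ((A::real^'n^'m) *v y) $ i"
  by (simp add: matrix_vector_mult_def sum_subtractf algebra_simps)

context lpctx begin

lemma main_bound:
  assumes fx: "primal_feasible A b x"
  shows "infnorm (xs - x) \<le> (c \<bullet> (xs - x)) * ((1 + onorm (\<lambda>v. A *v v)) / (lam * gam))"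
proof -
  define N where "N = onorm (\<lambda>v. A *v v)"
  have blin: "bounded_linear (\<lambda>v. A *v v)" by simp
  have N0: "0 \<le> N" unfolding N_def using blin by (rule onorm_pos_le)
  define e where "e = xs - x"
  have x0: "0 \<le> x $ i" for i using fx unfolding primal_feasible_def by blast
  have xb: "(A *v x) $ j \<le> b $ j" for j using fx unfolding primal_feasible_def by blast
  define sV :: "real^'m" where "sV = (\<chi> j. if j \<in> V then b $ j - (A *v x) $ j else 0)"
  define xU :: "real^'n" where "xU = (\<chi> i. if i \<in> U then 0 else x $ i)"
  define S1 where "S1 = (\<Sum>j\<in>UNIV. sV $ j)"
  define S2 where "S2 = (\<Sum>i\<in>UNIV. xU $ i)"
  define T where "T = S1 + S2"
  have sV0: "0 \<le> sV $ j" for j using xb[of j] by (simp add: sV_def)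
  have xU0: "0 \<le> xU $ i" for i using x0[of i] by (simp add: xU_def)
  have S10: "0 \<le> S1" unfolding S1_def using sV0 by (simp add: sum_nonneg)
  have S20: "0 \<le> S2" unfolding S2_def using xU0 by (simp add: sum_nonneg)
  have T0: "0 \<le> T" unfolding T_def using S10 S20 by simp
  have ce: "c \<bullet> e = (\<Sum>j\<in>UNIV. ys $ j * (b $ j - (A *v x) $ j)) + (\<Sum>i\<in>UNIV. ((ys v* A) $ i - c $ i) * x $ i)"
  proof -
    have "ys \<bullet> (A *v x) = (ys v* A) \<bullet> x" by (simp add: dot_lmul_matrix)
    then have "ys \<bullet> b - c \<bullet> x = (\<Sum>j\<in>UNIV. ys $ j * (b $ j - (A *v x) $ j)) + (\<Sum>i\<in>UNIV. ((ys v* A) $ i - c $ i) * x $ i)"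
      by (simp add: inner_vec_def algebra_simps sum_subtractf)
    moreover have "c \<bullet> e = ys \<bullet> b - c \<bullet> x" unfolding e_def using strong_duality by (simp add: inner_diff_right)
    ultimately show ?thesis by simp
  qed
  have k1: "(\<Sum>j\<in>UNIV. lam * sV $ j) \<le> (\<Sum>j\<in>UNIV. ys $ j * (b $ j - (A *v x) $ j))"
  proof (rule sum_mono)
    fix j show "lam * sV $ j \<le> ys $ j * (b $ j - (A *v x) $ j)"
    proof (cases "j \<in> V")
      case True then show ?thesis using lam_V[OF True] xb[of j] by (simp add: sV_def mult_right_mono)
    next
      case False then show ?thesis using notV[OF False] by (simp add: sV_def)
    qed
  qed
  have k2: "(\<Sum>i\<in>UNIV. lam * xU $ i) \<le> (\<Sum>i\<in>UNIV. ((ys v* A) $ i - c $ i) * x $ i)"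
  proof (rule sum_mono)
    fix i show "lam * xU $ i \<le> ((ys v* A) $ i - c $ i) * x $ i"
    proof (cases "i \<in> U")
      case True then show ?thesis using ys_ge[of i] x0[of i] by (simp add: xU_def)
    next
      case False then show ?thesis using lam_nU[OF False] x0[of i] by (simp add: xU_def mult_right_mono)
    qed
  qed
  have key1: "lam * T \<le> c \<bullet> e"
    using k1 k2 ce unfolding T_def S1_def S2_def by (simp add: sum_distrib_left distrib_left)
  have key2: "gam * \<bar>e $ i\<bar> \<le> (1 + N) * T" for i
  proof (cases "i \<in> U")
    case False
    have "\<bar>e $ i\<bar> = xU $ i" using False notU[OF False] x0[of i] by (simp add: e_def xU_def)
    also have "\<dots> \<le> S2" unfolding S2_def using xU0 by (intro member_le_sum) auto
    also have "\<dots> \<le> T" unfolding T_def using S10 by simp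
    finally have "\<bar>e $ i\<bar> \<le> T" .
    moreover have "gam * \<bar>e $ i\<bar> \<le> \<bar>e $ i\<bar>" using gam_le1 gam_pos by (simp add: mult_left_le_one_le)
    moreover have "T \<le> (1 + N) * T" using mult_nonneg_nonneg[OF N0 T0] by (simp add: distrib_right)
    ultimately show ?thesis by linarith
  next
    case True
    define k where "k = i"
    have k: "k \<in> U" using True k_def by simp
    define rc where "rc = restr_col A V"
    define eU :: "real^'n" where "eU = (\<chi> l. if l \<in> U then e $ l else 0)"
    define Rv :: "real^'m \<Rightarrow> real^'m" where "Rv v = (\<chi> j. if j \<in> V then v $ j else 0)" for v
    define W where "W = Rv (A *v eU)"
    have W_sum: "W = (\<Sum>l\<in>U. e $ l *\<^sub>R rc l)"
    proof (rule vec_eqI')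
      fix j
      have "(A *v eU) $ j = (\<Sum>l\<in>UNIV. A $ j $ l * (if l \<in> U then e $ l else 0))"
        by (simp add: matrix_vector_mult_def eU_def)
      also have "\<dots> = (\<Sum>l\<in>UNIV. if l \<in> U then A $ j $ l * e $ l else 0)"
        by (rule sum.cong) auto
      also have "\<dots> = (\<Sum>l\<in>UNIV \<inter> U. A $ j $ l * e $ l)"
        using sum.inter_restrict[of UNIV "\<lambda>l. A $ j $ l * e $ l" U] by simp
      finally have "(A *v eU) $ j = (\<Sum>l\<in>U. A $ j $ l * e $ l)" by simp
      then show "W $ j = (\<Sum>l\<in>U. e $ l *\<^sub>R rc l) $ j"
        by (simp add: W_def Rv_def rc_def rc_comp mult.commute)
    qed
    have eU_eq: "eU = e + xU"
      by (rule vec_eqI') (auto simp: eU_def xU_def e_def notU)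
    have W_eq: "W = sV + Rv (A *v xU)"
    proof (rule vec_eqI')
      fix j
      show "W $ j = (sV + Rv (A *v xU)) $ j"
      proof (cases "j \<in> V")
        case True
        then show ?thesis
          by (simp add: W_def Rv_def sV_def eU_eq mv_add e_def mv_diff inV)
      next
        case False then show ?thesis by (simp add: W_def Rv_def sV_def)
      qed
    qed
    have nRv: "norm (Rv v) \<le> norm v" for v
      by (rule norm_le_componentwise_cart) (simp add: Rv_def)
    have nsV: "norm sV \<le> S1"
      using norm_le_l1_cart[of sV] sV0 unfolding S1_def by simp
    have nxU: "norm xU \<le> S2"
      using norm_le_l1_cart[of xU] xU0 unfolding S2_def by simp
    have "norm W \<le> norm sV + norm (Rv (A *v xU))" unfolding W_eq by (rule norm_triangle_ineq)
    also have "\<dots> \<le> S1 + N * S2"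
    proof -
      have "norm (Rv (A *v xU)) \<le> norm (A *v xU)" by (rule nRv)
      also have "\<dots> \<le> N * norm xU" unfolding N_def using onorm[OF blin] by simp
      also have "\<dots> \<le> N * S2" using nxU N0 by (simp add: mult_left_mono)
      finally show ?thesis using nsV by simp
    qed
    also have "\<dots> \<le> (1 + N) * T" unfolding T_def using N0 S10 S20 by (simp add: algebra_simps)
    finally have nW: "norm W \<le> (1 + N) * T" .
    show ?thesis
    proof (cases "e $ k = 0")
      case True
      then show ?thesis using k_def N0 T0 by simp
    next
      case False
      define w where "w = - (\<Sum>l\<in>U - {k}. (e $ l / e $ k) *\<^sub>R rc l)"
      have wspan: "w \<in> span (rc ` (U - {k}))"
        unfolding w_def by (intro span_neg span_sum span_mul span_base) auto
      have "W = e $ k *\<^sub>R rc k + (\<Sum>l\<in>U - {k}. e $ l *\<^sub>R rc l)"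
        unfolding W_sum using k by (simp add: sum.remove)
      then have "(1 / e $ k) *\<^sub>R W = rc k - w"
        using False by (simp add: w_def scaleR_add_right scaleR_sum_right)
      then have dw: "dist (rc k) w = norm W / \<bar>e $ k\<bar>"
        by (metis dist_norm norm_scaleR abs_divide abs_one divide_inverse_commute mult.right_neutral inverse_eq_divide real_scaleR_def)
      have "gam \<le> infdist (rc k) (span (rc ` (U - {k})))" unfolding rc_def by (rule gam_le[OF k])
      also have "\<dots> \<le> dist (rc k) w" by (rule infdist_le[OF wspan])
      finally have "gam \<le> norm W / \<bar>e $ k\<bar>" using dw by simp
      then have "gam * \<bar>e $ k\<bar> \<le> norm W" using False by (simp add: pos_le_divide_eq)
      then show ?thesis using nW k_def by simp
    qed
  qed
  have lg: "0 < lam * gam" using lam_pos gam_pos by simp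
  have bnd: "\<bar>e $ i\<bar> \<le> (c \<bullet> e) * ((1 + N) / (lam * gam))" for i
  proof -
    have "\<bar>e $ i\<bar> = (gam * \<bar>e $ i\<bar>) / gam" using gam_pos by simp
    also have "\<dots> \<le> ((1 + N) * T) / gam" using key2[of i] gam_pos by (simp add: pos_le_divide_eq mult.commute)
    also have "\<dots> = (lam * T) * ((1 + N) / (lam * gam))" using lam_pos gam_pos by (simp add: field_simps)
    also have "\<dots> \<le> (c \<bullet> e) * ((1 + N) / (lam * gam))"
      using key1 lg N0 by (intro mult_right_mono) auto
    finally show ?thesis .
  qed
  have "infnorm e \<le> (c \<bullet> e) * ((1 + N) / (lam * gam))"
    unfolding infnorm_cart using bnd by (intro cSup_least) auto
  then show ?thesis unfolding e_def N_def .
qed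

end

theorem mainTheorem11:
  fixes A :: "real^'n^'m" and b :: "real^'m" and c :: "real^'n"
    and xs :: "real^'n" and ys :: "real^'m"
  assumes "primal_optimal A b c xs"
    and "\<forall>x. primal_optimal A b c x \<longrightarrow> x = xs"
    and "dual_optimal A b c ys"
    and "\<forall>y. dual_optimal A b c y \<longrightarrow> y = ys"
  shows "\<forall>x. primal_feasible A b x \<longrightarrow>
    infnorm (xs - x) \<le> (c \<bullet> (xs - x)) *
      ((1 + onorm (\<lambda>v. A *v v)) / (lp_lambda A b c xs ys * lp_gamma_min1 A xs ys))"
proof -
  interpret lpctx A b c xs ys using assms by unfold_locales
  show ?thesis using main_bound unfolding lam_def gam_def by blast
qed

end
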